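(* Let $M=\{D(c_i;r_i)\}_{i=1}^m$ be a $d$-disk system and let $\mu\ge 0$. Then $\mu=\mu_M$ if and only if the set $\bigcap_{i=1}^m D(c_i;\mu r_i)$ consists of exactly one point.
   Context: A $d$-disk system is a finite collection $M=\{D_1,\dots,D_m\}$ of closed Euclidean balls $D_i=D(c_i;r_i)=\{x\in\mathbb R^d:\|x-c_i\|\le r_i\}$ with $r_i>0$. For a scale $\lambda\ge0$, the rescaled system is $M_\lambda=\{D(c_i;\lambda r_i)\}_{i=1}^m$ (for $\lambda=0$, $D(c_i;0)=\{c_i\}$). The Čech scale of $M$ is $\mu_M=\inf\{\lambda\ge 0:\bigcap_{i=1}^m D(c_i;\lambda r_i)\neq\emptyset\}$. When the intersection $\bigcap_i D(c_i;\mu_M r_i)$ is a single point, that point is denoted $c_M$. *)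

theory Defs
  imports "HOL-Analysis.Analysis"
begin

definition cech_scale :: "nat \<Rightarrow> (nat \<Rightarrow> 'a::euclidean_space) \<Rightarrow> (nat \<Rightarrow> real) \<Rightarrow> real"
  where "cech_scale m c r = Inf {l. l \<ge> 0 \<and> (\<Inter>i\<in>{1..m}. cball (c i) (l * r i)) \<noteq> {}}"

end

theory Submission
  imports Defs
begin

lemma para: "norm (a + b)^2 + norm (a - b)^2 = 2 * norm a ^2 + 2 * norm (b::'a::real_inner)^2"
  by (simp add: power2_norm_eq_inner inner_add_left inner_add_right inner_diff_left inner_diff_right inner_commute)

lemma mid_strict:
  fixes p q c :: "'a::real_inner"
  assumes "norm (p - c) \<le> R" "norm (q - c) \<le> R" "p \<noteq> q"
  shows "norm ((1/2) *\<^sub>R (p + q) - c) < R"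
proof -
  have e: "(1/2) *\<^sub>R (p + q) - c = (1/2) *\<^sub>R ((p - c) + (q - c))"
    by (simp add: algebra_simps flip: scaleR_add_left)
  have pp: "norm ((p - c) + (q - c))^2 + norm ((p - c) - (q - c))^2 = 2 * norm (p-c)^2 + 2 * norm (q-c)^2"
    by (rule para)
  have "norm ((p - c) - (q - c)) > 0" using assms(3) by simp
  hence pos: "norm ((p - c) - (q - c))^2 > 0" by simp
  have R0: "R \<ge> 0" using assms(1) norm_ge_zero order.trans by blast
  have "norm (p-c)^2 \<le> R^2" using assms(1) by (simp add: power_mono)
  moreover have "norm (q-c)^2 \<le> R^2" using assms(2) by (simp add: power_mono)
  ultimately have "norm ((p - c) + (q - c))^2 < 4 * R^2" using pp pos by linarith
  hence "norm ((p - c) + (q - c))^2 < (2*R)^2" by (simp add: power2_eq_square)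
  hence "norm ((p - c) + (q - c)) < 2 * R" using R0 power2_less_imp_less by fastforce
  thus ?thesis unfolding e by simp
qed

theorem lemma2p1:
  fixes c :: "nat \<Rightarrow> 'a::euclidean_space" and r :: "nat \<Rightarrow> real" and m :: nat and \<mu> :: real
  assumes "m \<ge> 1"
    and "\<And>i. i \<in> {1..m} \<Longrightarrow> r i > 0"
    and "\<mu> \<ge> 0"
  shows "\<mu> = cech_scale m c r \<longleftrightarrow> (\<exists>p. (\<Inter>i\<in>{1..m}. cball (c i) (\<mu> * r i)) = {p})"
proof -
  define S where "S = (\<lambda>l. (\<Inter>i\<in>{1..m}. cball (c i) (l * r i)))"
  define L where "L = {l. l \<ge> 0 \<and> S l \<noteq> {}}"
  define I where "I = {1..m}"
  have fin: "finite I" and ne: "I \<noteq> {}" and one: "1 \<in> I" using assms(1) by (auto simp: I_def)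
  have rpos: "\<And>i. i \<in> I \<Longrightarrow> r i > 0" using assms(2) by (auto simp: I_def)
  have mu0: "cech_scale m c r = Inf L" unfolding cech_scale_def L_def S_def by simp
  have memS: "x \<in> S l \<longleftrightarrow> (\<forall>i\<in>I. dist (c i) x \<le> l * r i)" for x l
    by (simp add: S_def I_def)
  have mono: "S l \<subseteq> S l'" if "l \<le> l'" for l l'
  proof
    fix x assume "x \<in> S l"
    then show "x \<in> S l'" unfolding memS using that rpos
      by (meson less_imp_le mult_right_mono order_trans)
  qed
  have Max_in: "x \<in> S (Max ((\<lambda>i. dist (c i) x / r i) ` I))" for x
    unfolding memS
  proof
    fix i assume i: "i \<in> I"
    have "dist (c i) x / r i \<le> Max ((\<lambda>i. dist (c i) x / r i) ` I)"
      using fin i by (intro Max_ge) auto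
    thus "dist (c i) x \<le> Max ((\<lambda>i. dist (c i) x / r i) ` I) * r i"
      using rpos[OF i] by (simp add: divide_le_eq)
  qed
  have Max_nn: "Max ((\<lambda>i. dist (c i) x / r i) ` I) \<ge> 0" for x
  proof -
    have "dist (c 1) x / r 1 \<le> Max ((\<lambda>i. dist (c i) x / r i) ` I)"
      using fin one by (intro Max_ge) auto
    moreover have "dist (c 1) x / r 1 \<ge> 0" using rpos[OF one] by simp
    ultimately show ?thesis by linarith
  qed
  have LinL: "Max ((\<lambda>i. dist (c i) x / r i) ` I) \<in> L" for x
    using Max_in[of x] Max_nn[of x] unfolding L_def by blast
  have Lne: "L \<noteq> {}" using LinL by blast
  have bdd: "bdd_below L" unfolding L_def by (rule bdd_belowI[of _ 0]) auto
  define m0 where "m0 = Inf L"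
  have m0le: "l \<in> L \<Longrightarrow> m0 \<le> l" for l unfolding m0_def using bdd by (simp add: cInf_lower)
  have m0nn: "m0 \<ge> 0" unfolding m0_def using Lne by (rule cInf_greatest) (auto simp: L_def)
  have Lup: "l \<in> L" if "l' \<in> L" "l' \<le> l" for l l'
    using that mono unfolding L_def by auto
  have Snon: "S m0 \<noteq> {}"
  proof -
    obtain l1 where l1: "l1 \<in> L" using Lne by blast
    have cU: "compact (S l1)"
    proof -
      have "S l1 = cball (c 1) (l1 * r 1) \<inter> S l1" using one unfolding S_def I_def by auto
      moreover have "closed (S l1)" unfolding S_def by (intro closed_INT) auto
      ultimately show ?thesis by (metis compact_Int_closed compact_cball)
    qed
    have "S l1 \<inter> \<Inter>(S ` L) \<noteq> {}"
    proof (rule cU[unfolded compact_fip, rule_format])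
      show "closed a" if "a \<in> S ` L" for a using that unfolding S_def by (auto intro!: closed_INT)
      show "S l1 \<inter> \<Inter>B \<noteq> {}" if hB: "B \<subseteq> S ` L" "finite B" for B
      proof -
        obtain F where F: "F \<subseteq> L" "finite F" "B = S ` F"
          using hB by (meson finite_subset_image)
        define l where "l = Min (insert l1 F)"
        have lmem: "l \<in> insert l1 F" unfolding l_def using F by (intro Min_in) auto
        have lin: "l \<in> L" using lmem F l1 by blast
        have lle: "l \<le> l'" if "l' \<in> insert l1 F" for l'
          unfolding l_def using F that by (intro Min_le) auto
        have "S l \<subseteq> S l'" if "l' \<in> insert l1 F" for l' using lle[OF that] by (rule mono)
        hence "S l \<subseteq> S l1 \<inter> \<Inter>B" using F(3) by blast
        moreover have "S l \<noteq> {}" using lin unfolding L_def by auto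
        ultimately show ?thesis by blast
      qed
    qed
    then obtain x where x: "\<And>l. l \<in> L \<Longrightarrow> x \<in> S l" by blast
    have "x \<in> S m0" unfolding memS
    proof
      fix i assume i: "i \<in> I"
      have "dist (c i) x / r i \<le> m0" unfolding m0_def
      proof (rule cInf_greatest[OF Lne])
        fix l assume "l \<in> L"
        hence "dist (c i) x \<le> l * r i" using x memS i by blast
        thus "dist (c i) x / r i \<le> l" using rpos[OF i] by (simp add: divide_le_eq)
      qed
      thus "dist (c i) x \<le> m0 * r i" using rpos[OF i] by (simp add: divide_le_eq)
    qed
    thus ?thesis by blast
  qed
  have m0L: "m0 \<in> L" using Snon m0nn unfolding L_def by auto
  have sing: "\<exists>p. S m0 = {p}"
  proof -
    obtain p where p: "p \<in> S m0" using Snon by blast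
    have "q = p" if q: "q \<in> S m0" for q
    proof (rule ccontr)
      assume pq: "q \<noteq> p"
      define z where "z = (1/2) *\<^sub>R (p + q)"
      have lt: "dist (c i) z / r i < m0" if i: "i \<in> I" for i
      proof -
        have "norm (p - c i) \<le> m0 * r i" "norm (q - c i) \<le> m0 * r i"
          using p q i unfolding memS by (auto simp: dist_norm norm_minus_commute)
        hence "norm (z - c i) < m0 * r i" unfolding z_def using pq by (intro mid_strict) auto
        thus ?thesis using rpos[OF i] by (simp add: divide_less_eq dist_norm norm_minus_commute)
      qed
      have "Max ((\<lambda>i. dist (c i) z / r i) ` I) < m0"
        using fin ne lt by (subst Max_less_iff) auto
      with m0le[OF LinL[of z]] show False by linarith
    qed
    thus ?thesis using p by blast
  qed
  have below: "S l = {}" if "0 \<le> l" "l < m0" for l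
    using m0le[of l] that unfolding L_def by auto
  have above: "\<not> (\<exists>p. S l = {p})" if "m0 < l" for l
  proof
    assume "\<exists>p. S l = {p}"
    then obtain p where pS: "S l = {p}" by blast
    obtain x where x: "x \<in> S m0" using Snon by blast
    define rm where "rm = Min (r ` I)"
    have rm: "rm > 0" unfolding rm_def using fin ne rpos by (subst Min_gr_iff) auto
    have rmle: "i \<in> I \<Longrightarrow> rm \<le> r i" for i unfolding rm_def using fin by auto
    define \<delta> where "\<delta> = (l - m0) * rm"
    have d0: "\<delta> > 0" unfolding \<delta>_def using rm that by simp
    have sub: "cball x \<delta> \<subseteq> S l"
    proof
      fix y assume y: "y \<in> cball x \<delta>"
      show "y \<in> S l" unfolding memS
      proof
        fix i assume i: "i \<in> I"
        have "dist (c i) y \<le> dist (c i) x + dist x y" by (rule dist_triangle)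
        also have "\<dots> \<le> m0 * r i + (l - m0) * r i"
        proof (rule add_mono)
          show "dist (c i) x \<le> m0 * r i" using x i memS by blast
          have "dist x y \<le> \<delta>" using y by simp
          also have "\<delta> \<le> (l - m0) * r i" unfolding \<delta>_def
            using rmle[OF i] that by (intro mult_left_mono) auto
          finally show "dist x y \<le> (l - m0) * r i" .
        qed
        finally show "dist (c i) y \<le> l * r i" by (simp add: algebra_simps)
      qed
    qed
    obtain v :: 'a where v: "norm v = \<delta>" using vector_choose_size d0 by (metis less_imp_le)
    have "x \<in> S l" "x + v \<in> S l" using sub d0 v by (auto simp: dist_norm)
    hence "x = x + v" using pS by auto
    hence "v = 0" by simp
    with v d0 show False by simp
  qed
  have eqS: "(\<Inter>i\<in>{1..m}. cball (c i) (\<mu> * r i)) = S \<mu>" by (simp add: S_def)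
  show ?thesis
    unfolding mu0 m0_def[symmetric] eqS
  proof
    assume "\<mu> = m0" thus "\<exists>p. S \<mu> = {p}" using sing by simp
  next
    assume h: "\<exists>p. S \<mu> = {p}"
    show "\<mu> = m0"
    proof (rule ccontr)
      assume "\<mu> \<noteq> m0"
      hence "\<mu> < m0 \<or> m0 < \<mu>" by linarith
      thus False using below[of \<mu>] above[of \<mu>] h assms(3) by auto
    qed
  qed
qed

end
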